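(* Let $M$ be an exact $\mathfrak{K}$-module. Let $M'_1\subseteq M_1$ be an $s_1$-invariant, uniquely $p$-divisible $\mathbb{Z}/2$-graded subgroup. Let $M'_0:=\alpha_{01}(M'_1)$ and $M'_2:=\alpha_{21}(M'_1)$. Then $M'=M'_0\oplus M'_1\oplus M'_2$ is an exact $\mathfrak{K}$-submodule of $M$. It is uniquely $p$-divisible and isomorphic to an exact $\mathfrak{K}$-module of the form $E(X,Y,Z)$ with $X=M'_0$ and $Z=M'_2$. The quotient $M/M'$ is also exact.
   Context: Fix a prime $p$, $N(x)=1+x+\dots+x^{p-1}$, $\vartheta$ a primitive $p$-th root of unity. A $\mathfrak{K}$-module $M$ amounts to $\mathbb{Z}/2$-graded abelian groups $M_0,M_1,M_2$ with homomorphisms $\alpha_{jk}\colon M_k\to M_j$ ($j\neq k$; $\alpha_{12},\alpha_{21}$ grading-reversing, others grading-preserving) with $\alpha_{jk}\alpha_{km}=0$ for $\{j,k,m\}=\{0,1,2\}$ and, for $t_0:=1-\alpha_{02}\alpha_{20}$ on $M_0$, $s_1:=1-\alpha_{12}\alpha_{21}$ on $M_1$, $t_2:=1-\alpha_{20}\alpha_{02}$, $s_2:=1-\alpha_{21}\alpha_{12}$ on $M_2$: $\alpha_{01}\alpha_{10}=N(t_0)$, $\alpha_{10}\alpha_{01}=N(s_1)$, $N(t_2)+N(s_2)=p$. $M$ is exact if the cyclic sequences $M_0\xrightarrow{\alpha_{10}}M_1\xrightarrow{\alpha_{21}}M_2\xrightarrow{\alpha_{02}}M_0$ and $M_0\xrightarrow{\alpha_{20}}M_2\xrightarrow{\alpha_{12}}M_1\xrightarrow{\alpha_{01}}M_0$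 are exact. Uniquely $p$-divisible: multiplication by $p$ bijective. For a $\mathbb{Z}/2$-graded $\mathbb{Z}[1/p]$-module $X$ and $\mathbb{Z}/2$-graded $\mathbb{Z}[\vartheta,1/p]$-modules $Y,Z$, $E(X,Y,Z)$ is the exact $\mathfrak{K}$-module with $M_0=X\oplus Y$, $M_1=X\oplus Z$, $M_2=Y\oplus\Sigma Z$ ($\Sigma$ = parity reversal), $\alpha_{01}(x,z)=(x,0)$, $\alpha_{10}(x,y)=(px,0)$, $\alpha_{12}(y,z)=(0,(1-\vartheta)z)$, $\alpha_{21}(x,z)=(0,z)$, $\alpha_{20}(x,y)=(y,0)$, $\alpha_{02}(y,z)=(0,(1-\vartheta)y)$. *)

theory Defs
  imports Main "HOL-Library.Product_Plus" "HOL-Computational_Algebra.Primes"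
begin

(* A Z/2-graded subgroup of the ambient abelian group 'a is given by its two
   homogeneous pieces G False (even) and G True (odd); the group is their
   internal direct sum. *)

definition subgrp :: "'a::ab_group_add set \<Rightarrow> bool" where
  "subgrp S \<longleftrightarrow> 0 \<in> S \<and> (\<forall>x\<in>S. \<forall>y\<in>S. x + y \<in> S) \<and> (\<forall>x\<in>S. - x \<in> S)"

definition graded_group :: "(bool \<Rightarrow> 'a::ab_group_add set) \<Rightarrow> bool" where
  "graded_group G \<longleftrightarrow> (\<forall>d. subgrp (G d)) \<and> G False \<inter> G True = {0}"

definition car :: "(bool \<Rightarrow> 'a::ab_group_add set) \<Rightarrow> 'a set" where
  "car G = {x + y | x y. x \<in> G False \<and> y \<in> G True}"

definition graded_subgroup :: "(bool \<Rightarrow> 'a::ab_group_add set) \<Rightarrow> (bool \<Rightarrow> 'a set) \<Rightarrow> bool" where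
  "graded_subgroup H G \<longleftrightarrow> (\<forall>d. subgrp (H d) \<and> H d \<subseteq> G d)"

(* homomorphism of graded groups; flip = True means grading-reversing *)
definition ghom :: "bool \<Rightarrow> (bool \<Rightarrow> 'a::ab_group_add set) \<Rightarrow> (bool \<Rightarrow> 'b::ab_group_add set) \<Rightarrow> ('a \<Rightarrow> 'b) \<Rightarrow> bool" where
  "ghom flip G H f \<longleftrightarrow> (\<forall>d. \<forall>x\<in>G d. f x \<in> H (d \<noteq> flip))
     \<and> (\<forall>x\<in>car G. \<forall>y\<in>car G. f (x + y) = f x + f y)"

definition nmul :: "nat \<Rightarrow> 'a::ab_group_add \<Rightarrow> 'a" where
  "nmul n x = (\<Sum>i<n. x)"

definition Nop :: "nat \<Rightarrow> ('a::ab_group_add \<Rightarrow> 'a) \<Rightarrow> 'a \<Rightarrow> 'a" where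
  "Nop p f x = (\<Sum>i<p. (f ^^ i) x)"

definition uniq_pdiv :: "nat \<Rightarrow> (bool \<Rightarrow> 'a::ab_group_add set) \<Rightarrow> bool" where
  "uniq_pdiv p G \<longleftrightarrow> bij_betw (nmul p) (car G) (car G)"

record 'a kmod =
  kM0 :: "bool \<Rightarrow> 'a set"
  kM1 :: "bool \<Rightarrow> 'a set"
  kM2 :: "bool \<Rightarrow> 'a set"
  a01 :: "'a \<Rightarrow> 'a"
  a10 :: "'a \<Rightarrow> 'a"
  a12 :: "'a \<Rightarrow> 'a"
  a21 :: "'a \<Rightarrow> 'a"
  a02 :: "'a \<Rightarrow> 'a"
  a20 :: "'a \<Rightarrow> 'a"

definition kmodule :: "nat \<Rightarrow> 'a::ab_group_add kmod \<Rightarrow> bool" where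
  "kmodule p M \<longleftrightarrow>
     graded_group (kM0 M) \<and> graded_group (kM1 M) \<and> graded_group (kM2 M) \<and>
     ghom False (kM1 M) (kM0 M) (a01 M) \<and> ghom False (kM0 M) (kM1 M) (a10 M) \<and>
     ghom True (kM2 M) (kM1 M) (a12 M) \<and> ghom True (kM1 M) (kM2 M) (a21 M) \<and>
     ghom False (kM2 M) (kM0 M) (a02 M) \<and> ghom False (kM0 M) (kM2 M) (a20 M) \<and>
     (\<forall>x\<in>car (kM2 M). a01 M (a12 M x) = 0) \<and>
     (\<forall>x\<in>car (kM1 M). a02 M (a21 M x) = 0) \<and>
     (\<forall>x\<in>car (kM2 M). a10 M (a02 M x) = 0) \<and>
     (\<forall>x\<in>car (kM0 M). a12 M (a20 M x) = 0) \<and>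
     (\<forall>x\<in>car (kM1 M). a20 M (a01 M x) = 0) \<and>
     (\<forall>x\<in>car (kM0 M). a21 M (a10 M x) = 0) \<and>
     (\<forall>x\<in>car (kM0 M). a01 M (a10 M x) = Nop p (\<lambda>y. y - a02 M (a20 M y)) x) \<and>
     (\<forall>x\<in>car (kM1 M). a10 M (a01 M x) = Nop p (\<lambda>y. y - a12 M (a21 M y)) x) \<and>
     (\<forall>x\<in>car (kM2 M). Nop p (\<lambda>y. y - a20 M (a02 M y)) x
                        + Nop p (\<lambda>y. y - a21 M (a12 M y)) x = nmul p x)"


definition exact_at :: "'a set \<Rightarrow> ('a \<Rightarrow> 'a) \<Rightarrow> 'a::ab_group_add set \<Rightarrow> ('a \<Rightarrow> 'a) \<Rightarrow> bool" where
  "exact_at A f B g \<longleftrightarrow> f ` A = {x \<in> B. g x = 0}"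

definition kexact :: "'a::ab_group_add kmod \<Rightarrow> bool" where
  "kexact M \<longleftrightarrow>
     exact_at (car (kM0 M)) (a10 M) (car (kM1 M)) (a21 M) \<and>
     exact_at (car (kM1 M)) (a21 M) (car (kM2 M)) (a02 M) \<and>
     exact_at (car (kM2 M)) (a02 M) (car (kM0 M)) (a10 M) \<and>
     exact_at (car (kM0 M)) (a20 M) (car (kM2 M)) (a12 M) \<and>
     exact_at (car (kM2 M)) (a12 M) (car (kM1 M)) (a01 M) \<and>
     exact_at (car (kM1 M)) (a01 M) (car (kM0 M)) (a20 M)"

definition ksubmodule :: "'a::ab_group_add kmod \<Rightarrow> 'a kmod \<Rightarrow> bool" where
  "ksubmodule N M \<longleftrightarrow>
     graded_subgroup (kM0 N) (kM0 M) \<and> graded_subgroup (kM1 N) (kM1 M) \<and>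
     graded_subgroup (kM2 N) (kM2 M) \<and>
     a01 N = a01 M \<and> a10 N = a10 M \<and> a12 N = a12 M \<and>
     a21 N = a21 M \<and> a02 N = a02 M \<and> a20 N = a20 M \<and>
     a01 M ` car (kM1 N) \<subseteq> car (kM0 N) \<and> a10 M ` car (kM0 N) \<subseteq> car (kM1 N) \<and>
     a12 M ` car (kM2 N) \<subseteq> car (kM1 N) \<and> a21 M ` car (kM1 N) \<subseteq> car (kM2 N) \<and>
     a02 M ` car (kM2 N) \<subseteq> car (kM0 N) \<and> a20 M ` car (kM0 N) \<subseteq> car (kM2 N)"

definition kuniq_pdiv :: "nat \<Rightarrow> 'a::ab_group_add kmod \<Rightarrow> bool" where
  "kuniq_pdiv p M \<longleftrightarrow> uniq_pdiv p (kM0 M) \<and> uniq_pdiv p (kM1 M) \<and> uniq_pdiv p (kM2 M)"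

(* Exactness at B/B' of the induced sequence  A/A' --f--> B/B' --g--> C/C'.
   Via the correspondence theorem, image = kernel in B/B' is equivalent to
   equality of their preimages in B:  f(A) + B' = g^{-1}(C') \<inter> B. *)
definition quot_exact_at :: "'a set \<Rightarrow> ('a \<Rightarrow> 'a) \<Rightarrow> 'a::ab_group_add set \<Rightarrow> 'a set \<Rightarrow> ('a \<Rightarrow> 'a) \<Rightarrow> 'a set \<Rightarrow> bool" where
  "quot_exact_at A f B B' g C' \<longleftrightarrow>
     {f a + b | a b. a \<in> A \<and> b \<in> B'} = {x \<in> B. g x \<in> C'}"

definition kquot_exact :: "'a::ab_group_add kmod \<Rightarrow> 'a kmod \<Rightarrow> bool" where
  "kquot_exact M N \<longleftrightarrow>
     quot_exact_at (car (kM0 M)) (a10 M) (car (kM1 M)) (car (kM1 N)) (a21 M) (car (kM2 N)) \<and>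
     quot_exact_at (car (kM1 M)) (a21 M) (car (kM2 M)) (car (kM2 N)) (a02 M) (car (kM0 N)) \<and>
     quot_exact_at (car (kM2 M)) (a02 M) (car (kM0 M)) (car (kM0 N)) (a10 M) (car (kM1 N)) \<and>
     quot_exact_at (car (kM0 M)) (a20 M) (car (kM2 M)) (car (kM2 N)) (a12 M) (car (kM1 N)) \<and>
     quot_exact_at (car (kM2 M)) (a12 M) (car (kM1 M)) (car (kM1 N)) (a01 M) (car (kM0 N)) \<and>
     quot_exact_at (car (kM1 M)) (a01 M) (car (kM0 M)) (car (kM0 N)) (a20 M) (car (kM2 N))"

definition gbij :: "(bool \<Rightarrow> 'a::ab_group_add set) \<Rightarrow> (bool \<Rightarrow> 'b::ab_group_add set) \<Rightarrow> ('a \<Rightarrow> 'b) \<Rightarrow> bool" where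
  "gbij G H f \<longleftrightarrow> bij_betw f (car G) (car H) \<and> (\<forall>d. f ` G d = H d) \<and>
     (\<forall>x\<in>car G. \<forall>y\<in>car G. f (x + y) = f x + f y)"

definition kiso :: "'a::ab_group_add kmod \<Rightarrow> 'b::ab_group_add kmod \<Rightarrow> ('a \<Rightarrow> 'b) \<Rightarrow> ('a \<Rightarrow> 'b) \<Rightarrow> ('a \<Rightarrow> 'b) \<Rightarrow> bool" where
  "kiso M N f0 f1 f2 \<longleftrightarrow>
     gbij (kM0 M) (kM0 N) f0 \<and> gbij (kM1 M) (kM1 N) f1 \<and> gbij (kM2 M) (kM2 N) f2 \<and>
     (\<forall>x\<in>car (kM1 M). f0 (a01 M x) = a01 N (f1 x)) \<and>
     (\<forall>x\<in>car (kM0 M). f1 (a10 M x) = a10 N (f0 x)) \<and>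
     (\<forall>x\<in>car (kM2 M). f1 (a12 M x) = a12 N (f2 x)) \<and>
     (\<forall>x\<in>car (kM1 M). f2 (a21 M x) = a21 N (f1 x)) \<and>
     (\<forall>x\<in>car (kM2 M). f0 (a02 M x) = a02 N (f2 x)) \<and>
     (\<forall>x\<in>car (kM0 M). f2 (a20 M x) = a20 N (f0 x))"

(* Z/2-graded Z[1/p]-module: graded group on which p is invertible *)
definition Zp_module :: "nat \<Rightarrow> (bool \<Rightarrow> 'a::ab_group_add set) \<Rightarrow> bool" where
  "Zp_module p X \<longleftrightarrow> graded_group X \<and> uniq_pdiv p X"

(* Z/2-graded Z[\<vartheta>,1/p]-module: Z[\<vartheta>] = Z[x]/(N(x)) for p prime, so the
   structure is a grading-preserving endomorphism th (action of \<vartheta>) with N(th) = 0,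
   on a graded group on which p is invertible *)
definition Zth_module :: "nat \<Rightarrow> (bool \<Rightarrow> 'a::ab_group_add set) \<Rightarrow> ('a \<Rightarrow> 'a) \<Rightarrow> bool" where
  "Zth_module p Y th \<longleftrightarrow> graded_group Y \<and> uniq_pdiv p Y \<and> ghom False Y Y th \<and>
     (\<forall>y\<in>car Y. Nop p th y = 0)"

definition Emod :: "nat \<Rightarrow> (bool \<Rightarrow> 'a::ab_group_add set) \<Rightarrow> (bool \<Rightarrow> 'a set) \<Rightarrow> ('a \<Rightarrow> 'a)
                    \<Rightarrow> (bool \<Rightarrow> 'a set) \<Rightarrow> ('a \<Rightarrow> 'a) \<Rightarrow> ('a \<times> 'a) kmod" where
  "Emod p X Y thY Z thZ =
     \<lparr> kM0 = (\<lambda>d. X d \<times> Y d),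
       kM1 = (\<lambda>d. X d \<times> Z d),
       kM2 = (\<lambda>d. Y d \<times> Z (\<not> d)),
       a01 = (\<lambda>(x, z). (x, 0)),
       a10 = (\<lambda>(x, y). (nmul p x, 0)),
       a12 = (\<lambda>(y, z). (0, z - thZ z)),
       a21 = (\<lambda>(x, z). (0, z)),
       a02 = (\<lambda>(y, z). (0, y - thY y)),
       a20 = (\<lambda>(x, y). (y, 0)) \<rparr>"

end

theory Submission
  imports Defs
begin


lemma subgrp_diff: "subgrp S \<Longrightarrow> x\<in>S \<Longrightarrow> y\<in>S \<Longrightarrow> x - y \<in> S"
  unfolding subgrp_def by (metis diff_conv_add_uminus)
lemma subgrp_add: "subgrp S \<Longrightarrow> x\<in>S \<Longrightarrow> y\<in>S \<Longrightarrow> x + y \<in> S"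
  unfolding subgrp_def by blast
lemma subgrp_0: "subgrp S \<Longrightarrow> 0 \<in> S"
  unfolding subgrp_def by blast

lemma subgrp_sum: assumes "subgrp S" "finite A" shows "(\<And>i. i\<in>A \<Longrightarrow> g i \<in> S) \<Longrightarrow> sum g A \<in> S"
  using assms(2) by (induction A rule: finite_induct) (auto intro: subgrp_add subgrp_0 assms(1))

lemma car_subgrp: assumes "graded_group G" shows "subgrp (car G)"
proof -
  have s: "subgrp (G False)" "subgrp (G True)" using assms unfolding graded_group_def by auto
  have "0 \<in> car G" unfolding car_def using s subgrp_0 by force
  moreover have "x + y \<in> car G" if xy: "x \<in> car G" "y \<in> car G" for x y
  proof -
    obtain a b where "x = a + b" "a \<in> G False" "b \<in> G True" using xy unfolding car_def by blast
    moreover obtain c d where "y = c + d" "c \<in> G False" "d \<in> G True" using xy unfolding car_def by blast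
    ultimately have "x + y = (a + c) + (b + d)" "a + c \<in> G False" "b + d \<in> G True"
      using s by (auto simp: algebra_simps intro: subgrp_add)
    then show ?thesis unfolding car_def by blast
  qed
  moreover have "- x \<in> car G" if xx: "x \<in> car G" for x
  proof -
    obtain a b where "x = a + b" "a \<in> G False" "b \<in> G True" using xx unfolding car_def by blast
    then have "-x = (-a) + (-b)" "-a \<in> G False" "-b \<in> G True" using s by (auto simp: subgrp_def)
    then show ?thesis unfolding car_def by blast
  qed
  ultimately show ?thesis unfolding subgrp_def by blast
qed

lemma piece_in_car: assumes "graded_group G" "x \<in> G d" shows "x \<in> car G"
proof -
  have s: "subgrp (G False)" "subgrp (G True)" using assms unfolding graded_group_def by auto
  show ?thesis
  proof (cases d)
    case True
    then have "x = 0 + x" "0 \<in> G False" "x \<in> G True" using assms s subgrp_0 by auto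
    then show ?thesis unfolding car_def by blast
  next
    case False
    then have "x = x + 0" "x \<in> G False" "0 \<in> G True" using assms s subgrp_0 by auto
    then show ?thesis unfolding car_def by blast
  qed
qed

lemma graded_subgroup_gg: assumes "graded_subgroup H G" "graded_group G" shows "graded_group H"
proof -
  have "H False \<inter> H True \<subseteq> {0}" using assms unfolding graded_subgroup_def graded_group_def by blast
  moreover have "0 \<in> H False" using assms unfolding graded_subgroup_def subgrp_def by blast
  moreover have "0 \<in> H True" using assms unfolding graded_subgroup_def subgrp_def by blast
  ultimately show ?thesis using assms unfolding graded_subgroup_def graded_group_def by blast
qed

lemma graded_subgroup_car: assumes "graded_subgroup H G" shows "car H \<subseteq> car G"
  using assms unfolding graded_subgroup_def car_def by blast

lemma graded_subgroup_piece:
  assumes "graded_subgroup H G" "graded_group G" "x \<in> car H" "x \<in> G d"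
  shows "x \<in> H d"
proof -
  obtain u v where uv: "x = u + v" "u \<in> H False" "v \<in> H True" using assms(3) unfolding car_def by blast
  have sub: "H False \<subseteq> G False" "H True \<subseteq> G True" "subgrp (G False)" "subgrp (G True)"
    using assms(1,2) unfolding graded_subgroup_def graded_group_def by auto
  have int: "G False \<inter> G True = {0}" using assms(2) unfolding graded_group_def by blast
  show ?thesis
  proof (cases d)
    case True
    have "u = x - v" using uv by simp
    moreover have "x - v \<in> G True" using True assms(4) uv sub subgrp_diff[of "G True" x v] by auto
    ultimately have "u = 0" using int uv sub by blast
    then show ?thesis using uv True by simp
  next
    case False
    have "v = x - u" using uv by simp
    moreover have "x - u \<in> G False" using False assms(4) uv sub subgrp_diff[of "G False" x u] by auto
    ultimately have "v = 0" using int uv sub by blast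
    then show ?thesis using uv False by simp
  qed
qed

definition addon :: "'a::ab_group_add set \<Rightarrow> ('a \<Rightarrow> 'b::ab_group_add) \<Rightarrow> bool" where
  "addon S f \<longleftrightarrow> (\<forall>x\<in>S. \<forall>y\<in>S. f (x + y) = f x + f y)"

lemma addon_0: "subgrp S \<Longrightarrow> addon S f \<Longrightarrow> f 0 = 0"
  unfolding addon_def by (metis add_cancel_right_right add_0 subgrp_0)
lemma addon_add: "addon S f \<Longrightarrow> x\<in>S \<Longrightarrow> y\<in>S \<Longrightarrow> f (x + y) = f x + f y"
  unfolding addon_def by blast
lemma addon_diff: "subgrp S \<Longrightarrow> addon S f \<Longrightarrow> x\<in>S \<Longrightarrow> y\<in>S \<Longrightarrow> f (x - y) = f x - f y"
proof -
  assume a: "subgrp S" "addon S f" "x\<in>S" "y\<in>S"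
  then have "f x = f ((x - y) + y)" by simp
  also have "\<dots> = f (x - y) + f y" using addon_add[OF a(2) subgrp_diff[OF a(1,3,4)] a(4)] by simp
  finally show ?thesis by (simp add: algebra_simps)
qed
lemma addon_sum: assumes "subgrp S" "addon S f" "finite A" shows "(\<And>i. i\<in>A \<Longrightarrow> g i \<in> S)
   \<Longrightarrow> f (sum g A) = (\<Sum>i\<in>A. f (g i))"
  using assms(3)
proof (induction A rule: finite_induct)
  case empty then show ?case using addon_0 assms by simp
next
  case (insert a A)
  then have "sum g A \<in> S" using subgrp_sum assms by blast
  then show ?case using insert by (simp add: addon_add[OF assms(2)])
qed

lemma nmul_Suc: "nmul (Suc n) x = nmul n x + x" unfolding nmul_def by simp
lemma nmul_add: "nmul n (x + y) = nmul n x + nmul n y" unfolding nmul_def by (simp add: sum.distrib)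
lemma nmul_diff: "nmul n (x - y) = nmul n x - nmul n y" unfolding nmul_def by (simp add: sum_subtractf)
lemma nmul_0[simp]: "nmul n 0 = 0" unfolding nmul_def by simp
lemma nmul_in: "subgrp S \<Longrightarrow> x \<in> S \<Longrightarrow> nmul n x \<in> S" unfolding nmul_def by (rule subgrp_sum) auto
lemma addon_nmul: "subgrp S \<Longrightarrow> addon S f \<Longrightarrow> x \<in> S \<Longrightarrow> f (nmul n x) = nmul n (f x)"
  unfolding nmul_def by (simp add: addon_sum)

lemma funpow_in: "(\<And>x. x\<in>S \<Longrightarrow> f x \<in> S) \<Longrightarrow> x \<in> S \<Longrightarrow> (f ^^ i) x \<in> S"
  by (induction i) auto
lemma Nop_in: "subgrp S \<Longrightarrow> (\<And>x. x\<in>S \<Longrightarrow> f x \<in> S) \<Longrightarrow> x \<in> S \<Longrightarrow> Nop p f x \<in> S"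
  unfolding Nop_def by (rule subgrp_sum) (auto intro: funpow_in)
lemma funpow_fix: "f x = x \<Longrightarrow> (f ^^ i) x = x" by (induction i) auto
lemma Nop_fix: "f x = x \<Longrightarrow> Nop p f x = nmul p x"
  unfolding Nop_def nmul_def by (rule sum.cong) (auto simp: funpow_fix)
lemma funpow_inv: "(\<And>x. x\<in>S \<Longrightarrow> f x \<in> S) \<Longrightarrow> (\<And>x. x\<in>S \<Longrightarrow> g (f x) = g x) \<Longrightarrow> x \<in> S
   \<Longrightarrow> g ((f ^^ i) x) = g x"
proof (induction i)
  case (Suc i) then show ?case using funpow_in[of S f x i] by simp
qed simp
lemma Nop_inv: "subgrp S \<Longrightarrow> addon S g \<Longrightarrow> (\<And>x. x\<in>S \<Longrightarrow> f x \<in> S) \<Longrightarrow> (\<And>x. x\<in>S \<Longrightarrow> g (f x) = g x)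
   \<Longrightarrow> x \<in> S \<Longrightarrow> g (Nop p f x) = nmul p (g x)"
proof -
  assume a: "subgrp S" "addon S g" "\<And>x. x\<in>S \<Longrightarrow> f x \<in> S" "\<And>x. x\<in>S \<Longrightarrow> g (f x) = g x" "x \<in> S"
  have "g (Nop p f x) = (\<Sum>i<p. g ((f ^^ i) x))"
    unfolding Nop_def by (rule addon_sum[OF a(1,2)]) (auto intro: funpow_in a)
  also have "\<dots> = (\<Sum>i<p. g x)"
    by (rule sum.cong) (auto intro: funpow_inv[of S f g] a)
  finally show ?thesis unfolding nmul_def .
qed

lemma ghom_addon: "ghom fl G H f \<Longrightarrow> addon (car G) f" unfolding ghom_def addon_def by blast

lemma ghom_in: assumes "graded_group G" "graded_group H" "ghom fl G H f" "x \<in> car G"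
  shows "f x \<in> car H"
proof -
  obtain u v where uv: "x = u + v" "u \<in> G False" "v \<in> G True" using assms(4) unfolding car_def by blast
  have "u \<in> car G" "v \<in> car G" using uv assms(1) piece_in_car by blast+
  then have "f x = f u + f v" using uv assms(3) unfolding ghom_def by blast
  moreover have "f u \<in> car H" "f v \<in> car H" using uv assms(2,3) piece_in_car unfolding ghom_def by blast+
  ultimately show ?thesis using subgrp_add[OF car_subgrp[OF assms(2)]] by simp
qed

lemma uniq_inj: "uniq_pdiv p G \<Longrightarrow> graded_group G \<Longrightarrow> x \<in> car G \<Longrightarrow> nmul p x = 0 \<Longrightarrow> x = 0"
  unfolding uniq_pdiv_def bij_betw_def inj_on_def
  by (metis car_subgrp nmul_0 subgrp_0)
lemma uniq_surj: "uniq_pdiv p G \<Longrightarrow> u \<in> car G \<Longrightarrow> \<exists>w\<in>car G. nmul p w = u"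
  unfolding uniq_pdiv_def bij_betw_def by (metis imageE)



lemma addon_mono: "addon S f \<Longrightarrow> T \<subseteq> S \<Longrightarrow> addon T f" unfolding addon_def by blast

locale K7 =
  fixes p :: nat and M :: "'a::ab_group_add kmod" and N1 :: "bool \<Rightarrow> 'a set"
  assumes kmod: "kmodule p M" and kex: "kexact M" and sub: "graded_subgroup N1 (kM1 M)"
    and sinv: "\<forall>x\<in>car N1. x - a12 M (a21 M x) \<in> car N1" and upd: "uniq_pdiv p N1"
begin

abbreviation "M0 \<equiv> car (kM0 M)"
abbreviation "M1 \<equiv> car (kM1 M)"
abbreviation "M2 \<equiv> car (kM2 M)"
abbreviation "N \<equiv> car N1"

lemma gg: "graded_group (kM0 M)" "graded_group (kM1 M)" "graded_group (kM2 M)"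
  using kmod unfolding kmodule_def by auto
lemma ggN: "graded_group N1" using graded_subgroup_gg[OF sub gg(2)] .
lemma hom: "ghom False (kM1 M) (kM0 M) (a01 M)" "ghom False (kM0 M) (kM1 M) (a10 M)"
     "ghom True (kM2 M) (kM1 M) (a12 M)" "ghom True (kM1 M) (kM2 M) (a21 M)"
     "ghom False (kM2 M) (kM0 M) (a02 M)" "ghom False (kM0 M) (kM2 M) (a20 M)"
  using kmod unfolding kmodule_def by auto
lemma rel:
  "\<And>x. x\<in>M2 \<Longrightarrow> a01 M (a12 M x) = 0"
  "\<And>x. x\<in>M1 \<Longrightarrow> a02 M (a21 M x) = 0"
  "\<And>x. x\<in>M2 \<Longrightarrow> a10 M (a02 M x) = 0"
  "\<And>x. x\<in>M0 \<Longrightarrow> a12 M (a20 M x) = 0"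
  "\<And>x. x\<in>M1 \<Longrightarrow> a20 M (a01 M x) = 0"
  "\<And>x. x\<in>M0 \<Longrightarrow> a21 M (a10 M x) = 0"
  using kmod unfolding kmodule_def by auto
lemma relN:
  "\<And>x. x\<in>M0 \<Longrightarrow> a01 M (a10 M x) = Nop p (\<lambda>y. y - a02 M (a20 M y)) x"
  "\<And>x. x\<in>M1 \<Longrightarrow> a10 M (a01 M x) = Nop p (\<lambda>y. y - a12 M (a21 M y)) x"
  "\<And>x. x\<in>M2 \<Longrightarrow> Nop p (\<lambda>y. y - a20 M (a02 M y)) x + Nop p (\<lambda>y. y - a21 M (a12 M y)) x = nmul p x"
  using kmod unfolding kmodule_def by auto
lemma ex:
  "a10 M ` M0 = {x\<in>M1. a21 M x = 0}"
  "a21 M ` M1 = {x\<in>M2. a02 M x = 0}"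
  "a02 M ` M2 = {x\<in>M0. a10 M x = 0}"
  "a20 M ` M0 = {x\<in>M2. a12 M x = 0}"
  "a12 M ` M2 = {x\<in>M1. a01 M x = 0}"
  "a01 M ` M1 = {x\<in>M0. a20 M x = 0}"
  using kex unfolding kexact_def exact_at_def by auto

lemma sg: "subgrp M0" "subgrp M1" "subgrp M2" "subgrp N"
  using gg ggN car_subgrp by auto
lemma addcl: "\<And>x y. x\<in>M0 \<Longrightarrow> y\<in>M0 \<Longrightarrow> x + y \<in> M0" "\<And>x y. x\<in>M1 \<Longrightarrow> y\<in>M1 \<Longrightarrow> x + y \<in> M1"
  "\<And>x y. x\<in>M2 \<Longrightarrow> y\<in>M2 \<Longrightarrow> x + y \<in> M2" "\<And>x y. x\<in>N \<Longrightarrow> y\<in>N \<Longrightarrow> x + y \<in> N"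
  using subgrp_add[OF sg(1)] subgrp_add[OF sg(2)] subgrp_add[OF sg(3)] subgrp_add[OF sg(4)] by auto
lemma diffcl: "\<And>x y. x\<in>M0 \<Longrightarrow> y\<in>M0 \<Longrightarrow> x - y \<in> M0" "\<And>x y. x\<in>M1 \<Longrightarrow> y\<in>M1 \<Longrightarrow> x - y \<in> M1"
  "\<And>x y. x\<in>M2 \<Longrightarrow> y\<in>M2 \<Longrightarrow> x - y \<in> M2" "\<And>x y. x\<in>N \<Longrightarrow> y\<in>N \<Longrightarrow> x - y \<in> N"
  using subgrp_diff[OF sg(1)] subgrp_diff[OF sg(2)] subgrp_diff[OF sg(3)] subgrp_diff[OF sg(4)] by auto
lemma NM1: "N \<subseteq> M1" using graded_subgroup_car[OF sub] .

lemma inM: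
  "\<And>x. x\<in>M1 \<Longrightarrow> a01 M x \<in> M0" "\<And>x. x\<in>M0 \<Longrightarrow> a10 M x \<in> M1"
  "\<And>x. x\<in>M2 \<Longrightarrow> a12 M x \<in> M1" "\<And>x. x\<in>M1 \<Longrightarrow> a21 M x \<in> M2"
  "\<And>x. x\<in>M2 \<Longrightarrow> a02 M x \<in> M0" "\<And>x. x\<in>M0 \<Longrightarrow> a20 M x \<in> M2"
  using ghom_in[OF gg(2) gg(1) hom(1)] ghom_in[OF gg(1) gg(2) hom(2)]
   ghom_in[OF gg(3) gg(2) hom(3)] ghom_in[OF gg(2) gg(3) hom(4)]
   ghom_in[OF gg(3) gg(1) hom(5)] ghom_in[OF gg(1) gg(3) hom(6)] by auto

lemma ad: "addon M1 (a01 M)" "addon M0 (a10 M)" "addon M2 (a12 M)" "addon M1 (a21 M)"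
  "addon M2 (a02 M)" "addon M0 (a20 M)"
  using hom ghom_addon by auto

lemma zero[simp]: "a01 M 0 = 0" "a10 M 0 = 0" "a12 M 0 = 0" "a21 M 0 = 0" "a02 M 0 = 0" "a20 M 0 = 0"
  using ad sg addon_0 by metis+

lemma addM:
  "\<And>x y. x\<in>M1 \<Longrightarrow> y\<in>M1 \<Longrightarrow> a01 M (x + y) = a01 M x + a01 M y"
  "\<And>x y. x\<in>M0 \<Longrightarrow> y\<in>M0 \<Longrightarrow> a10 M (x + y) = a10 M x + a10 M y"
  "\<And>x y. x\<in>M2 \<Longrightarrow> y\<in>M2 \<Longrightarrow> a12 M (x + y) = a12 M x + a12 M y"
  "\<And>x y. x\<in>M1 \<Longrightarrow> y\<in>M1 \<Longrightarrow> a21 M (x + y) = a21 M x + a21 M y"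
  "\<And>x y. x\<in>M2 \<Longrightarrow> y\<in>M2 \<Longrightarrow> a02 M (x + y) = a02 M x + a02 M y"
  "\<And>x y. x\<in>M0 \<Longrightarrow> y\<in>M0 \<Longrightarrow> a20 M (x + y) = a20 M x + a20 M y"
  using ad addon_add by metis+

lemma diffM:
  "\<And>x y. x\<in>M1 \<Longrightarrow> y\<in>M1 \<Longrightarrow> a01 M (x - y) = a01 M x - a01 M y"
  "\<And>x y. x\<in>M0 \<Longrightarrow> y\<in>M0 \<Longrightarrow> a10 M (x - y) = a10 M x - a10 M y"
  "\<And>x y. x\<in>M2 \<Longrightarrow> y\<in>M2 \<Longrightarrow> a12 M (x - y) = a12 M x - a12 M y"
  "\<And>x y. x\<in>M1 \<Longrightarrow> y\<in>M1 \<Longrightarrow> a21 M (x - y) = a21 M x - a21 M y"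
  "\<And>x y. x\<in>M2 \<Longrightarrow> y\<in>M2 \<Longrightarrow> a02 M (x - y) = a02 M x - a02 M y"
  "\<And>x y. x\<in>M0 \<Longrightarrow> y\<in>M0 \<Longrightarrow> a20 M (x - y) = a20 M x - a20 M y"
  using ad sg addon_diff by metis+

lemma nmulM:
  "\<And>x. x\<in>M1 \<Longrightarrow> a01 M (nmul n x) = nmul n (a01 M x)"
  "\<And>x. x\<in>M0 \<Longrightarrow> a10 M (nmul n x) = nmul n (a10 M x)"
  "\<And>x. x\<in>M2 \<Longrightarrow> a12 M (nmul n x) = nmul n (a12 M x)"
  "\<And>x. x\<in>M1 \<Longrightarrow> a21 M (nmul n x) = nmul n (a21 M x)"
  "\<And>x. x\<in>M2 \<Longrightarrow> a02 M (nmul n x) = nmul n (a02 M x)"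
  "\<And>x. x\<in>M0 \<Longrightarrow> a20 M (nmul n x) = nmul n (a20 M x)"
  using ad sg addon_nmul by metis+

lemma inN: "x \<in> N \<Longrightarrow> x \<in> M1" using NM1 by blast

abbreviation "T x \<equiv> a12 M (a21 M x)"
abbreviation "s \<equiv> (\<lambda>y. y - a12 M (a21 M y))"

lemma T_M1: "x \<in> M1 \<Longrightarrow> T x \<in> M1" using inM by blast
lemma s_M1: "x \<in> M1 \<Longrightarrow> s x \<in> M1" using inM(3,4) diffcl(2) by blast
lemma s_N: "x \<in> N \<Longrightarrow> s x \<in> N" using sinv by blast
lemma T_N: "x \<in> N \<Longrightarrow> T x \<in> N"
proof -
  assume "x \<in> N"
  then have "x - s x \<in> N" using s_N diffcl(4) by blast
  then show ?thesis by simp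
qed
lemma T_add: "x \<in> M1 \<Longrightarrow> y \<in> M1 \<Longrightarrow> T (x + y) = T x + T y"
  using addM inM by simp
lemma T_nmul: "x \<in> M1 \<Longrightarrow> T (nmul n x) = nmul n (T x)"
  using nmulM inM by simp
lemma K_N: assumes "x \<in> N" shows "a10 M (a01 M x) \<in> N"
proof -
  have "Nop p s x \<in> N" by (rule Nop_in[OF sg(4)]) (auto intro: s_N assms)
  then show ?thesis using relN(2)[OF inN[OF assms]] by simp
qed
lemma K_nmul: "x \<in> M1 \<Longrightarrow> a10 M (a01 M (nmul n x)) = nmul n (a10 M (a01 M x))"
  using nmulM inM by simp
lemma a01_s: "x \<in> M1 \<Longrightarrow> a01 M (s x) = a01 M x"
  using diffM(1) T_M1 rel(1) inM by simp
lemma a01_K: assumes "x \<in> M1" shows "a01 M (a10 M (a01 M x)) = nmul p (a01 M x)"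
proof -
  have "a01 M (Nop p s x) = nmul p (a01 M x)" by (rule Nop_inv[OF sg(2) ad(1)]) (auto intro: s_M1 a01_s assms)
  then show ?thesis using relN(2)[OF assms] by simp
qed

lemma pinj: "x \<in> N \<Longrightarrow> nmul p x = 0 \<Longrightarrow> x = 0" using uniq_inj[OF upd ggN] by blast
lemma pdiv: "u \<in> N \<Longrightarrow> \<exists>w\<in>N. nmul p w = u" using uniq_surj[OF upd] by blast

lemma F4: assumes "x \<in> N" "a21 M x = 0" shows "\<exists>w\<in>N. x = a10 M (a01 M w)"
proof -
  obtain w where w: "w \<in> N" "nmul p w = x" using pdiv assms by blast
  have "nmul p (T w) = T (nmul p w)" using T_nmul[OF inN[OF w(1)]] by simp
  then have "nmul p (T w) = 0" using w assms by simp
  then have "T w = 0" using pinj T_N w by blast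
  then have "s w = w" by simp
  then have "Nop p s w = x" using Nop_fix[of s w p] w by simp
  then have "x = a10 M (a01 M w)" using relN(2)[OF inN[OF w(1)]] by simp
  then show ?thesis using w(1) by blast
qed

lemma F5: assumes "y \<in> N" "a10 M (a01 M y) = 0" shows "a01 M y = 0"
proof -
  obtain w where w: "w \<in> N" "nmul p w = y" using pdiv assms by blast
  have "nmul p (a10 M (a01 M w)) = a10 M (a01 M (nmul p w))" using K_nmul[OF inN[OF w(1)]] by simp
  then have "nmul p (a10 M (a01 M w)) = 0" using w assms by simp
  then have "a10 M (a01 M w) = 0" using pinj K_N w by blast
  then have "nmul p (a01 M w) = 0" using a01_K[OF inN[OF w(1)]] by simp
  moreover have "a01 M y = nmul p (a01 M w)" using nmulM(1)[OF inN[OF w(1)]] w(2) by blast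
  ultimately show ?thesis by simp
qed

lemma Rlem: "w \<in> M1 \<Longrightarrow> T (\<Sum>j<i. (s ^^ j) w) = w - (s ^^ i) w"
proof (induction i)
  case 0 then show ?case by simp
next
  case (Suc i)
  have fi: "(s ^^ j) w \<in> M1" for j by (rule funpow_in[of M1]) (auto intro: s_M1 Suc.prems)
  have i1: "(\<Sum>j<i. (s ^^ j) w) \<in> M1" by (rule subgrp_sum[OF sg(2)]) (auto intro: fi)
  have i2: "(s ^^ i) w \<in> M1" by (rule fi)
  have "T (\<Sum>j<Suc i. (s ^^ j) w) = T (\<Sum>j<i. (s ^^ j) w) + T ((s ^^ i) w)"
    using T_add[OF i1 i2] by simp
  also have "\<dots> = w - (s ^^ Suc i) w" using Suc by simp
  finally show ?case .
qed

lemma Qlem: assumes "w \<in> N" shows "\<exists>q\<in>N. T q = nmul p w - a10 M (a01 M w)"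
proof -
  define q where "q = (\<Sum>i<p. (\<Sum>j<i. (s ^^ j) w))"
  have fi: "(s ^^ j) w \<in> N" for j by (rule funpow_in[of N]) (auto intro: s_N assms)
  have inR: "(\<Sum>j<i. (s ^^ j) w) \<in> N" for i by (rule subgrp_sum[OF sg(4)]) (auto intro: fi)
  have qN: "q \<in> N" unfolding q_def by (rule subgrp_sum[OF sg(4)]) (auto intro: inR)
  have adT: "addon M1 T" unfolding addon_def using T_add by blast
  have "T q = (\<Sum>i<p. T (\<Sum>j<i. (s ^^ j) w))"
    unfolding q_def by (rule addon_sum[OF sg(2) adT]) (use inR inN in auto)
  also have "\<dots> = (\<Sum>i<p. w - (s ^^ i) w)" using Rlem inN assms by simp
  also have "\<dots> = nmul p w - Nop p s w" unfolding nmul_def Nop_def by (simp add: sum_subtractf)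
  also have "\<dots> = nmul p w - a10 M (a01 M w)" using relN(2) inN assms by simp
  finally show ?thesis using qN by blast
qed

lemma F6: assumes "y \<in> N" "a01 M y = 0" shows "\<exists>q\<in>N. y = T q"
proof -
  obtain w where w: "w \<in> N" "nmul p w = y" using pdiv assms by blast
  have "nmul p (a10 M (a01 M w)) = a10 M (a01 M (nmul p w))" using K_nmul[OF inN[OF w(1)]] by simp
  then have "nmul p (a10 M (a01 M w)) = 0" using w assms by simp
  then have "a10 M (a01 M w) = 0" using pinj K_N w by blast
  then show ?thesis using Qlem[OF w(1)] w by (metis diff_zero)
qed

lemma F7: assumes "x \<in> M1" "T x = 0" shows "nmul p (a21 M x) = 0"
proof -
  let ?z = "a21 M x"
  have z: "?z \<in> M2" using inM assms by blast
  have "Nop p (\<lambda>y. y - a20 M (a02 M y)) ?z = nmul p ?z"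
    by (rule Nop_fix) (use rel(2) assms in simp)
  moreover have "Nop p (\<lambda>y. y - a21 M (a12 M y)) ?z = nmul p ?z"
    by (rule Nop_fix) (use assms in simp)
  ultimately have "nmul p ?z + nmul p ?z = nmul p ?z" using relN(3)[OF z] by simp
  then show ?thesis by simp
qed

lemma F8: assumes "x \<in> N" "T x = 0" shows "a21 M x = 0"
proof -
  obtain w where w: "w \<in> N" "nmul p w = x" using pdiv assms by blast
  have "nmul p (T w) = T (nmul p w)" using T_nmul[OF inN[OF w(1)]] by simp
  then have "nmul p (T w) = 0" using w assms by simp
  then have "T w = 0" using pinj T_N w by blast
  then have "nmul p (a21 M w) = 0" using F7 inN w by blast
  moreover have "a21 M x = nmul p (a21 M w)" using nmulM(4)[OF inN[OF w(1)]] w(2) by blast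
  ultimately show ?thesis by simp
qed

lemma F11: assumes "x \<in> N" "a01 M x = 0" "a21 M x = 0" shows "x = 0"
proof -
  have "s x = x" using assms by simp
  then have "Nop p s x = nmul p x" by (rule Nop_fix)
  then have "nmul p x = 0" using relN(2)[OF inN[OF assms(1)]] assms by simp
  then show ?thesis using pinj assms by blast
qed

lemma F12: assumes "u \<in> N" "v \<in> N" shows "\<exists>x\<in>N. a01 M x = a01 M u \<and> a21 M x = a21 M v"
proof -
  obtain w where w: "w \<in> N" "nmul p w = u" using pdiv assms by blast
  obtain w' where w': "w' \<in> N" "nmul p w' = v" using pdiv assms by blast
  obtain q where q: "q \<in> N" "T q = nmul p w' - a10 M (a01 M w')" using Qlem w' by blast
  define e where "e = a10 M (a01 M w)"
  have eN: "e \<in> N" using K_N w e_def by simp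
  have e1: "a01 M e = a01 M u" using a01_K[OF inN[OF w(1)]] nmulM(1)[OF inN[OF w(1)], of p] w(2) e_def by simp
  have e2: "a21 M e = 0" using rel(6) inM inN w e_def by simp
  have q1: "a01 M (T q) = 0" using rel(1)[OF inM(4)[OF inN[OF q(1)]]] .
  have "a21 M (T q) = a21 M (nmul p w') - a21 M (a10 M (a01 M w'))"
    using q(2) diffM(4)[OF inN[OF nmul_in[OF sg(4) w'(1)]] inN[OF K_N[OF w'(1)]]] by simp
  then have q2: "a21 M (T q) = a21 M v" using w' rel(6)[OF inM(1)[OF inN[OF w'(1)]]] by simp
  have "e + T q \<in> N" using addcl(4)[OF eN T_N[OF q(1)]] .
  moreover have "a01 M (e + T q) = a01 M u" using addM(1)[OF inN[OF eN] inN[OF T_N[OF q(1)]]] e1 q1 by simp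
  moreover have "a21 M (e + T q) = a21 M v" using addM(4)[OF inN[OF eN] inN[OF T_N[OF q(1)]]] e2 q2 by simp
  ultimately show ?thesis by blast
qed

end


lemma car_image: assumes "graded_group G" "addon (car G) f" shows "car (\<lambda>d. f ` G d) = f ` car G"
proof
  show "car (\<lambda>d. f ` G d) \<subseteq> f ` car G"
  proof
    fix z assume "z \<in> car (\<lambda>d. f ` G d)"
    then obtain a b where ab: "z = f a + f b" "a \<in> G False" "b \<in> G True" unfolding car_def by blast
    then have "a \<in> car G" "b \<in> car G" using assms(1) piece_in_car by blast+
    then have "z = f (a + b)" "a + b \<in> car G" using ab addon_add[OF assms(2)] subgrp_add[OF car_subgrp[OF assms(1)]] by auto
    then show "z \<in> f ` car G" by blast
  qed
  show "f ` car G \<subseteq> car (\<lambda>d. f ` G d)"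
  proof
    fix z assume "z \<in> f ` car G"
    then obtain a b where ab: "z = f (a + b)" "a \<in> G False" "b \<in> G True" unfolding car_def by blast
    then have "a \<in> car G" "b \<in> car G" using assms(1) piece_in_car by blast+
    then have "z = f a + f b" using ab assms addon_add by metis
    then show "z \<in> car (\<lambda>d. f ` G d)" using ab unfolding car_def by blast
  qed
qed

lemma car_neg: "car (\<lambda>d. G (\<not> d)) = car G"
  unfolding car_def by (auto simp: add.commute) (metis add.commute)+

lemma car_prod: "car (\<lambda>d. A d \<times> B d) = car A \<times> car B"
proof
  show "car (\<lambda>d. A d \<times> B d) \<subseteq> car A \<times> car B" unfolding car_def by auto
  show "car A \<times> car B \<subseteq> car (\<lambda>d. A d \<times> B d)"
  proof
    fix z assume "z \<in> car A \<times> car B"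
    then obtain a1 a2 b1 b2 where "z = (a1 + a2, b1 + b2)" "a1 \<in> A False" "a2 \<in> A True"
      "b1 \<in> B False" "b2 \<in> B True" unfolding car_def by auto
    then have "z = (a1, b1) + (a2, b2)" "(a1, b1) \<in> A False \<times> B False" "(a2, b2) \<in> A True \<times> B True"
      by auto
    then show "z \<in> car (\<lambda>d. A d \<times> B d)" unfolding car_def by blast
  qed
qed

lemma img_subgrp: assumes "subgrp A" "A \<subseteq> S" "subgrp S" "addon S f" shows "subgrp (f ` A)"
proof -
  have "0 \<in> f ` A" using assms addon_0 subgrp_0 by (metis image_eqI)
  moreover have "f a + f b \<in> f ` A" if "a \<in> A" "b \<in> A" for a b
    using that assms addon_add[OF assms(4)] subgrp_add by (metis image_eqI subsetD)
  moreover have "- f a \<in> f ` A" if "a \<in> A" for a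
  proof -
    have "f (0 - a) = f 0 - f a" using addon_diff[OF assms(3,4) subgrp_0[OF assms(3)]] that assms(2) by blast
    then have "- f a = f (- a)" using addon_0[OF assms(3,4)] by simp
    moreover have "- a \<in> A" using that assms(1) unfolding subgrp_def by blast
    ultimately show ?thesis by blast
  qed
  ultimately show ?thesis unfolding subgrp_def by blast
qed

lemma gbij_intro:
  assumes "graded_group G" "\<And>d. f ` G d = H d" "addon (car G) f" "\<And>x. x \<in> car G \<Longrightarrow> f x = 0 \<Longrightarrow> x = 0"
  shows "gbij G H f"
proof -
  have sg: "subgrp (car G)" using car_subgrp assms(1) .
  have "inj_on f (car G)"
  proof (rule inj_onI)
    fix x y assume "x \<in> car G" "y \<in> car G" "f x = f y"
    then have "f (x - y) = 0" using addon_diff[OF sg assms(3)] by simp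
    then have "x - y = 0" using assms(4) subgrp_diff sg \<open>x \<in> car G\<close> \<open>y \<in> car G\<close> by blast
    then show "x = y" by simp
  qed
  moreover have "H = (\<lambda>d. f ` G d)" using assms(2) by auto
  then have "f ` car G = car H" using car_image[OF assms(1,3)] by simp
  ultimately show ?thesis unfolding gbij_def bij_betw_def using assms(2,3) unfolding addon_def by blast
qed

lemma gg_neg: "graded_group G \<Longrightarrow> graded_group (\<lambda>d. G (\<not> d))"
  unfolding graded_group_def by auto

lemma img_gg: assumes "graded_group G" "graded_group H" "ghom fl G H f" "graded_subgroup A G"
  shows "graded_group (\<lambda>d. f ` A d)" "graded_subgroup (\<lambda>d. f ` A d) (\<lambda>d. H (d \<noteq> fl))"
proof -
  have sub: "f ` A d \<subseteq> H (d \<noteq> fl)" for d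
    using assms(3,4) unfolding ghom_def graded_subgroup_def by blast
  have sgi: "subgrp (f ` A d)" for d
  proof (rule img_subgrp)
    show "subgrp (A d)" using assms(4) unfolding graded_subgroup_def by blast
    show "A d \<subseteq> car G" using assms(1,4) piece_in_car unfolding graded_subgroup_def by blast
    show "subgrp (car G)" using car_subgrp assms(1) .
    show "addon (car G) f" using ghom_addon assms(3) .
  qed
  have "H False \<inter> H True = {0}" using assms(2) unfolding graded_group_def by blast
  moreover have "0 \<in> f ` A False" "0 \<in> f ` A True" using sgi subgrp_0 by blast+
  ultimately have "f ` A False \<inter> f ` A True = {0}" using sub[of False] sub[of True] by (cases fl) auto
  then show "graded_group (\<lambda>d. f ` A d)" unfolding graded_group_def using sgi by blast
  show "graded_subgroup (\<lambda>d. f ` A d) (\<lambda>d. H (d \<noteq> fl))" unfolding graded_subgroup_def using sgi sub by blast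
qed

context K7 begin

lemma Npiece: "N1 d \<subseteq> kM1 M d" "subgrp (N1 d)" "N1 d \<subseteq> N"
  using sub ggN piece_in_car unfolding graded_subgroup_def by blast+

lemma pieces_sg: "subgrp (kM0 M d)" "subgrp (kM1 M d)" "subgrp (kM2 M d)"
  using gg unfolding graded_group_def by blast+
lemma pdiff: "\<And>x y. x\<in>kM0 M d \<Longrightarrow> y\<in>kM0 M d \<Longrightarrow> x - y \<in> kM0 M d"
  "\<And>x y. x\<in>kM1 M d \<Longrightarrow> y\<in>kM1 M d \<Longrightarrow> x - y \<in> kM1 M d"
  "\<And>x y. x\<in>kM2 M d \<Longrightarrow> y\<in>kM2 M d \<Longrightarrow> x - y \<in> kM2 M d"
  "\<And>x y. x\<in>N1 d \<Longrightarrow> y\<in>N1 d \<Longrightarrow> x - y \<in> N1 d"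
  using subgrp_diff[OF pieces_sg(1)] subgrp_diff[OF pieces_sg(2)] subgrp_diff[OF pieces_sg(3)] subgrp_diff[OF Npiece(2)] by auto

lemma carP0[simp]: "car (\<lambda>d. a01 M ` N1 d) = a01 M ` N"
  using car_image[OF ggN addon_mono[OF ad(1) NM1]] .
lemma carP2[simp]: "car (\<lambda>d. a21 M ` N1 (\<not> d)) = a21 M ` N"
  using car_image[OF ggN addon_mono[OF ad(4) NM1]] car_neg[of "\<lambda>d. a21 M ` N1 d"] by simp
lemma carZ[simp]: "car (\<lambda>d. a21 M ` N1 d) = a21 M ` N"
  using car_image[OF ggN addon_mono[OF ad(4) NM1]] .

lemma ggP0: "graded_group (\<lambda>d. a01 M ` N1 d)" "graded_subgroup (\<lambda>d. a01 M ` N1 d) (kM0 M)"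
  using img_gg[OF gg(2) gg(1) hom(1) sub] by auto
lemma ggZ: "graded_group (\<lambda>d. a21 M ` N1 d)" "graded_subgroup (\<lambda>d. a21 M ` N1 d) (\<lambda>d. kM2 M (\<not> d))"
  using img_gg[OF gg(2) gg(3) hom(4) sub] by auto
lemma ggP2: "graded_group (\<lambda>d. a21 M ` N1 (\<not> d))" "graded_subgroup (\<lambda>d. a21 M ` N1 (\<not> d)) (kM2 M)"
proof -
  have "a21 M ` N1 (\<not> d) \<subseteq> kM2 M d" for d
  proof -
    have "a21 M ` N1 (\<not> d) \<subseteq> kM2 M (\<not> \<not> d)" using ggZ(2) unfolding graded_subgroup_def by blast
    then show ?thesis by simp
  qed
  then show "graded_group (\<lambda>d. a21 M ` N1 (\<not> d))" "graded_subgroup (\<lambda>d. a21 M ` N1 (\<not> d)) (kM2 M)"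
    using gg_neg[OF ggZ(1)] ggZ(2) unfolding graded_subgroup_def by auto
qed

lemma hom_piece:
  "\<And>x. x \<in> kM1 M d \<Longrightarrow> a01 M x \<in> kM0 M d"
  "\<And>x. x \<in> kM1 M d \<Longrightarrow> a21 M x \<in> kM2 M (\<not> d)"
  "\<And>x. x \<in> kM2 M d \<Longrightarrow> a12 M x \<in> kM1 M (\<not> d)"
  using hom unfolding ghom_def by force+

lemma s_piece: assumes "x \<in> N1 d" shows "s x \<in> N1 d"
proof -
  have "x \<in> kM1 M d" using assms Npiece by blast
  then have "T x \<in> kM1 M d" using hom_piece by fastforce
  then have "s x \<in> kM1 M d" using \<open>x \<in> kM1 M d\<close> pdiff(2) by blast
  moreover have "s x \<in> N" using s_N assms Npiece by blast
  ultimately show ?thesis using graded_subgroup_piece[OF sub gg(2)] by blast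
qed
lemma T_piece: assumes "x \<in> N1 d" shows "T x \<in> N1 d"
proof -
  have "x - s x \<in> N1 d" using s_piece assms pdiff(4) by blast
  then show ?thesis by simp
qed
lemma K_piece: assumes "x \<in> N1 d" shows "a10 M (a01 M x) \<in> N1 d"
proof -
  have "Nop p s x \<in> N1 d" by (rule Nop_in[OF Npiece(2)]) (auto intro: s_piece assms)
  moreover have "x \<in> N" using assms Npiece(3) by blast
  ultimately show ?thesis using relN(2)[OF inN] by simp
qed

lemma zero_piece: assumes "y \<in> N1 e" "a01 M y \<in> kM0 M (\<not> e)" "a21 M y \<in> kM2 M e" shows "y = 0"
proof -
  have "a01 M y \<in> kM0 M e" "a21 M y \<in> kM2 M (\<not> e)" using assms(1) Npiece hom_piece by blast+
  moreover have "kM0 M e \<inter> kM0 M (\<not> e) = {0}" "kM2 M e \<inter> kM2 M (\<not> e) = {0}"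
    using gg unfolding graded_group_def by (cases e; auto)+
  ultimately have "a01 M y = 0" "a21 M y = 0" using assms by blast+
  then show ?thesis using F11 assms Npiece by blast
qed

lemma grade_det: assumes "x \<in> N" "a01 M x \<in> kM0 M d" "a21 M x \<in> kM2 M (\<not> d)" shows "x \<in> N1 d"
proof -
  obtain x0 x1 where xx: "x = x0 + x1" "x0 \<in> N1 False" "x1 \<in> N1 True" using assms(1) unfolding car_def by blast
  have i: "x0 \<in> M1" "x1 \<in> M1" using xx Npiece(3) inN by blast+
  have d0: "a01 M x0 = a01 M x - a01 M x1" "a21 M x0 = a21 M x - a21 M x1"
    using xx i addM by simp_all
  have d1: "a01 M x1 = a01 M x - a01 M x0" "a21 M x1 = a21 M x - a21 M x0"
    using xx i addM by simp_all
  have p0: "a01 M x0 \<in> kM0 M False" "a21 M x0 \<in> kM2 M True"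
   "a01 M x1 \<in> kM0 M True" "a21 M x1 \<in> kM2 M False"
  proof -
    have xk: "x0 \<in> kM1 M False" "x1 \<in> kM1 M True" using xx Npiece(1) by blast+
    show "a01 M x0 \<in> kM0 M False" "a21 M x0 \<in> kM2 M True" "a01 M x1 \<in> kM0 M True" "a21 M x1 \<in> kM2 M False"
      using hom_piece(1)[OF xk(1)] hom_piece(2)[OF xk(1)] hom_piece(1)[OF xk(2)] hom_piece(2)[OF xk(2)] by simp_all
  qed
  show ?thesis
  proof (cases d)
    case True
    have "a01 M x0 \<in> kM0 M True" using d0 assms True p0 pdiff(1)[of "a01 M x" True "a01 M x1"] by simp
    moreover have "a21 M x0 \<in> kM2 M False" using d0 assms True p0 pdiff(3)[of "a21 M x" False "a21 M x1"] by simp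
    ultimately have "x0 = 0" using zero_piece[of x0 False] xx by simp
    then show ?thesis using xx True by simp
  next
    case False
    have "a01 M x1 \<in> kM0 M False" using d1 assms False p0 pdiff(1)[of "a01 M x" False "a01 M x0"] by simp
    moreover have "a21 M x1 \<in> kM2 M True" using d1 assms False p0 pdiff(3)[of "a21 M x" True "a21 M x0"] by simp
    ultimately have "x1 = 0" using zero_piece[of x1 True] xx by simp
    then show ?thesis using xx False by simp
  qed
qed

lemma pdiv_img: assumes "addon M1 f" "\<And>y. y\<in>N \<Longrightarrow> nmul p (f y) = 0 \<Longrightarrow> f y = 0"
  shows "bij_betw (nmul p) (f ` N) (f ` N)"
proof -
  have "inj_on (nmul p) (f ` N)"
  proof (rule inj_onI)
    fix x y assume "x \<in> f ` N" "y \<in> f ` N" "nmul p x = nmul p y"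
    then obtain a b where ab: "a \<in> N" "b \<in> N" "x = f a" "y = f b" by blast
    then have "f (a - b) = x - y" using addon_diff[OF sg(2) assms(1)] inN by simp
    moreover have "nmul p (x - y) = 0" unfolding nmul_diff using \<open>nmul p x = nmul p y\<close> by simp
    ultimately have "f (a - b) = 0" using assms(2)[of "a - b"] ab diffcl(4) by simp
    then show "x = y" using \<open>f (a - b) = x - y\<close> by simp
  qed
  moreover have "nmul p ` f ` N = f ` N"
  proof
    show "nmul p ` f ` N \<subseteq> f ` N"
    proof
      fix z assume "z \<in> nmul p ` f ` N"
      then obtain y where y: "y \<in> N" "z = nmul p (f y)" by blast
      then have "z = f (nmul p y)" using addon_nmul[OF sg(2) assms(1) inN[OF y(1)]] by simp
      moreover have "nmul p y \<in> N" using nmul_in[OF sg(4) y(1)] .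
      ultimately show "z \<in> f ` N" by blast
    qed
    show "f ` N \<subseteq> nmul p ` f ` N"
    proof
      fix z assume "z \<in> f ` N"
      then obtain u where u: "u \<in> N" "z = f u" by blast
      then obtain w where "w \<in> N" "nmul p w = u" using pdiv by blast
      then have "z = nmul p (f w)" using u addon_nmul[OF sg(2) assms(1)] inN by metis
      then show "z \<in> nmul p ` f ` N" using \<open>w \<in> N\<close> by blast
    qed
  qed
  ultimately show ?thesis unfolding bij_betw_def by blast
qed

lemma pdiv01: "bij_betw (nmul p) (a01 M ` N) (a01 M ` N)"
proof (rule pdiv_img[OF ad(1)])
  fix y assume y: "y \<in> N" "nmul p (a01 M y) = 0"
  then have "a01 M (nmul p y) = 0" using nmulM inN by simp
  then have "nmul p (a10 M (a01 M y)) = 0" using K_nmul inN y by (metis zero(2))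
  then have "a10 M (a01 M y) = 0" using pinj K_N y by blast
  then show "a01 M y = 0" using F5 y by blast
qed

lemma pdiv21: "bij_betw (nmul p) (a21 M ` N) (a21 M ` N)"
proof (rule pdiv_img[OF ad(4)])
  fix y assume y: "y \<in> N" "nmul p (a21 M y) = 0"
  then have "a21 M (nmul p y) = 0" using nmulM inN by simp
  then have "nmul p (T y) = 0" using T_nmul inN y by (metis zero(3))
  then have "T y = 0" using pinj T_N y by blast
  then show "a21 M y = 0" using F8 y by blast
qed

end


context K7 begin

lemma img_sub: "a01 M ` N \<subseteq> M0" "a21 M ` N \<subseteq> M2"
  using inM(1)[OF inN] inM(4)[OF inN] by auto

lemma g01: "ghom False N1 (\<lambda>d. a01 M ` N1 d) (a01 M)"
  unfolding ghom_def
proof (intro conjI allI ballI)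
  fix d x assume "x \<in> N1 d" then show "a01 M x \<in> a01 M ` N1 (d \<noteq> False)" by simp
next
  fix x y assume "x \<in> car N1" "y \<in> car N1"
  then show "a01 M (x + y) = a01 M x + a01 M y" using addM(1)[OF inN inN] by blast
qed
lemma g10: "ghom False (\<lambda>d. a01 M ` N1 d) N1 (a10 M)"
  unfolding ghom_def
proof (intro conjI allI ballI)
  fix d x assume "x \<in> a01 M ` N1 d" then show "a10 M x \<in> N1 (d \<noteq> False)" using K_piece by auto
next
  fix x y assume "x \<in> car (\<lambda>d. a01 M ` N1 d)" "y \<in> car (\<lambda>d. a01 M ` N1 d)"
  then have "x \<in> M0" "y \<in> M0" using img_sub by auto
  then show "a10 M (x + y) = a10 M x + a10 M y" using addM(2) by blast
qed
lemma g12: "ghom True (\<lambda>d. a21 M ` N1 (\<not> d)) N1 (a12 M)"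
  unfolding ghom_def
proof (intro conjI allI ballI)
  fix d x assume "x \<in> a21 M ` N1 (\<not> d)" then show "a12 M x \<in> N1 (d \<noteq> True)" using T_piece by auto
next
  fix x y assume "x \<in> car (\<lambda>d. a21 M ` N1 (\<not> d))" "y \<in> car (\<lambda>d. a21 M ` N1 (\<not> d))"
  then have "x \<in> M2" "y \<in> M2" using img_sub by auto
  then show "a12 M (x + y) = a12 M x + a12 M y" using addM(3) by blast
qed
lemma g21: "ghom True N1 (\<lambda>d. a21 M ` N1 (\<not> d)) (a21 M)"
  unfolding ghom_def
proof (intro conjI allI ballI)
  fix d x assume "x \<in> N1 d" then show "a21 M x \<in> a21 M ` N1 (\<not> (d \<noteq> True))" by simp
next
  fix x y assume "x \<in> car N1" "y \<in> car N1"
  then show "a21 M (x + y) = a21 M x + a21 M y" using addM(4)[OF inN inN] by blast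
qed
lemma g02: "ghom False (\<lambda>d. a21 M ` N1 (\<not> d)) (\<lambda>d. a01 M ` N1 d) (a02 M)"
  unfolding ghom_def
proof (intro conjI allI ballI)
  fix d x assume "x \<in> a21 M ` N1 (\<not> d)"
  then obtain y where y: "y \<in> N1 (\<not> d)" "x = a21 M y" by blast
  then have "a02 M x = a01 M 0" using rel(2)[OF inN] Npiece(3) by auto
  moreover have "0 \<in> N1 (d \<noteq> False)" using subgrp_0[OF Npiece(2)] .
  ultimately show "a02 M x \<in> a01 M ` N1 (d \<noteq> False)" by blast
next
  fix x y assume "x \<in> car (\<lambda>d. a21 M ` N1 (\<not> d))" "y \<in> car (\<lambda>d. a21 M ` N1 (\<not> d))"
  then have "x \<in> M2" "y \<in> M2" using img_sub by auto
  then show "a02 M (x + y) = a02 M x + a02 M y" using addM(5) by blast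
qed
lemma g20: "ghom False (\<lambda>d. a01 M ` N1 d) (\<lambda>d. a21 M ` N1 (\<not> d)) (a20 M)"
  unfolding ghom_def
proof (intro conjI allI ballI)
  fix d x assume "x \<in> a01 M ` N1 d"
  then obtain y where y: "y \<in> N1 d" "x = a01 M y" by blast
  then have "a20 M x = a21 M 0" using rel(5)[OF inN] Npiece(3) by auto
  moreover have "0 \<in> N1 (\<not> (d \<noteq> False))" using subgrp_0[OF Npiece(2)] .
  ultimately show "a20 M x \<in> a21 M ` N1 (\<not> (d \<noteq> False))" by blast
next
  fix x y assume "x \<in> car (\<lambda>d. a01 M ` N1 d)" "y \<in> car (\<lambda>d. a01 M ` N1 d)"
  then have "x \<in> M0" "y \<in> M0" using img_sub by auto
  then show "a20 M (x + y) = a20 M x + a20 M y" using addM(6) by blast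
qed

abbreviation "Mp \<equiv> M\<lparr> kM0 := (\<lambda>d. a01 M ` N1 d), kM1 := N1, kM2 := (\<lambda>d. a21 M ` N1 (\<not> d)) \<rparr>"

lemma zN: "0 \<in> N" using sg(4) subgrp_0 by blast
lemma z01: "0 \<in> a01 M ` N" using image_eqI[of 0 "a01 M" 0 N] zN by simp
lemma z21: "0 \<in> a21 M ` N" using image_eqI[of 0 "a21 M" 0 N] zN by simp

lemma subm: "ksubmodule Mp M"
proof -
  have "a10 M ` a01 M ` N \<subseteq> N" using K_N by blast
  moreover have "a12 M ` a21 M ` N \<subseteq> N" using T_N by blast
  moreover have "a02 M ` a21 M ` N \<subseteq> a01 M ` N" using rel(2) inN zN zero(1) by (auto intro!: image_eqI)
  moreover have "a20 M ` a01 M ` N \<subseteq> a21 M ` N" using rel(5) inN zN zero(4) by (auto intro!: image_eqI)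
  ultimately show ?thesis unfolding ksubmodule_def using ggP0(2) ggP2(2) sub by simp
qed

lemma kmodp: "kmodule p Mp"
proof -
  have "\<forall>x\<in>a21 M ` N. a01 M (a12 M x) = 0" using rel(1) img_sub by blast
  moreover have "\<forall>x\<in>N. a02 M (a21 M x) = 0" using rel(2) inN by blast
  moreover have "\<forall>x\<in>a21 M ` N. a10 M (a02 M x) = 0" using rel(3) img_sub by blast
  moreover have "\<forall>x\<in>a01 M ` N. a12 M (a20 M x) = 0" using rel(4) img_sub by blast
  moreover have "\<forall>x\<in>N. a20 M (a01 M x) = 0" using rel(5) inN by blast
  moreover have "\<forall>x\<in>a01 M ` N. a21 M (a10 M x) = 0" using rel(6) img_sub by blast
  moreover have "\<forall>x\<in>a01 M ` N. a01 M (a10 M x) = Nop p (\<lambda>y. y - a02 M (a20 M y)) x"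
    using relN(1) img_sub by blast
  moreover have "\<forall>x\<in>N. a10 M (a01 M x) = Nop p (\<lambda>y. y - a12 M (a21 M y)) x"
    using relN(2) inN by blast
  moreover have "\<forall>x\<in>a21 M ` N. Nop p (\<lambda>y. y - a20 M (a02 M y)) x + Nop p (\<lambda>y. y - a21 M (a12 M y)) x = nmul p x"
    using relN(3) img_sub by blast
  ultimately show ?thesis unfolding kmodule_def
    using ggP0(1) ggN ggP2(1) g01 g10 g12 g21 g02 g20 by simp
qed

lemma kexp: "kexact Mp"
proof -
  have e1: "a10 M ` a01 M ` N = {x\<in>N. a21 M x = 0}"
  proof (intro equalityI subsetI)
    fix z assume "z \<in> a10 M ` a01 M ` N"
    then obtain y where y: "y \<in> N" "z = a10 M (a01 M y)" by blast
    then show "z \<in> {x\<in>N. a21 M x = 0}" using K_N[OF y(1)] rel(6)[OF inM(1)[OF inN[OF y(1)]]] by simp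
  next
    fix z assume "z \<in> {x\<in>N. a21 M x = 0}"
    then obtain w where "w \<in> N" "z = a10 M (a01 M w)" using F4 by blast
    then show "z \<in> a10 M ` a01 M ` N" by blast
  qed
  have e2: "a21 M ` N = {x \<in> a21 M ` N. a02 M x = 0}" using rel(2)[OF inN] by blast
  have e3: "a02 M ` a21 M ` N = {x \<in> a01 M ` N. a10 M x = 0}"
  proof -
    have "a02 M ` a21 M ` N = {0}" using rel(2)[OF inN] zN by force
    moreover have "{x \<in> a01 M ` N. a10 M x = 0} = {0}"
    proof (intro equalityI subsetI)
      fix z assume "z \<in> {x \<in> a01 M ` N. a10 M x = 0}"
      then obtain y where "y \<in> N" "z = a01 M y" "a10 M (a01 M y) = 0" by blast
      then show "z \<in> {0}" using F5 by blast
    next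
      fix z assume "z \<in> {0::'a}"
      then show "z \<in> {x \<in> a01 M ` N. a10 M x = 0}" using z01 by simp
    qed
    ultimately show ?thesis by simp
  qed
  have e4: "a20 M ` a01 M ` N = {x \<in> a21 M ` N. a12 M x = 0}"
  proof -
    have "a20 M ` a01 M ` N = {0}" using rel(5)[OF inN] zN by force
    moreover have "{x \<in> a21 M ` N. a12 M x = 0} = {0}"
    proof (intro equalityI subsetI)
      fix z assume "z \<in> {x \<in> a21 M ` N. a12 M x = 0}"
      then obtain y where "y \<in> N" "z = a21 M y" "T y = 0" by blast
      then show "z \<in> {0}" using F8 by blast
    next
      fix z assume "z \<in> {0::'a}"
      then show "z \<in> {x \<in> a21 M ` N. a12 M x = 0}" using z21 by simp
    qed
    ultimately show ?thesis by simp
  qed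
  have e5: "a12 M ` a21 M ` N = {x\<in>N. a01 M x = 0}"
  proof (intro equalityI subsetI)
    fix z assume "z \<in> a12 M ` a21 M ` N"
    then obtain y where y: "y \<in> N" "z = T y" by blast
    then show "z \<in> {x\<in>N. a01 M x = 0}" using T_N[OF y(1)] rel(1)[OF inM(4)[OF inN[OF y(1)]]] by simp
  next
    fix z assume "z \<in> {x\<in>N. a01 M x = 0}"
    then obtain w where "w \<in> N" "z = T w" using F6 by blast
    then show "z \<in> a12 M ` a21 M ` N" by blast
  qed
  have e6: "a01 M ` N = {x \<in> a01 M ` N. a20 M x = 0}" using rel(5)[OF inN] by blast
  show ?thesis unfolding kexact_def exact_at_def using e1 e2 e3 e4 e5 e6 by simp
qed

lemma kupd: "kuniq_pdiv p Mp"
  unfolding kuniq_pdiv_def using pdiv01 pdiv21 upd unfolding uniq_pdiv_def by simp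

end


lemma const0_pow: "(((\<lambda>_::'a. 0::'a) ^^ i) 0) = (0::'a::ab_group_add)" by (induction i) simp_all

lemma Zth0: "Zth_module p (\<lambda>_. {0::'a::ab_group_add}) (\<lambda>_. 0)"
proof -
  have c: "car (\<lambda>_. {0::'a}) = {0}" unfolding car_def by auto
  have s: "subgrp {0::'a}" unfolding subgrp_def by auto
  have 1: "graded_group (\<lambda>_. {0::'a})" unfolding graded_group_def using s by auto
  have "bij_betw (nmul p) {0::'a} {0}" unfolding bij_betw_def inj_on_def by auto
  then have 2: "uniq_pdiv p (\<lambda>_. {0::'a})" unfolding uniq_pdiv_def c .
  have 3: "ghom False (\<lambda>_. {0::'a}) (\<lambda>_. {0}) (\<lambda>_. 0)" unfolding ghom_def by auto
  have 4: "Nop p (\<lambda>_::'a. 0::'a) 0 = 0" unfolding Nop_def using const0_pow[where 'a='a] by simp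
  have 5: "\<forall>y\<in>car (\<lambda>_. {0::'a}). Nop p (\<lambda>_::'a. 0::'a) y = 0" unfolding c using 4 by simp
  show ?thesis unfolding Zth_module_def using 1 2 3 5 by (intro conjI)
qed

context K7 begin

lemma quot: "kquot_exact M Mp"
proof -
  have q1: "{a10 M a + b |a b. a \<in> M0 \<and> b \<in> N} = {x \<in> M1. a21 M x \<in> a21 M ` N}"
  proof (intro equalityI subsetI)
    fix x assume "x \<in> {a10 M a + b |a b. a \<in> M0 \<and> b \<in> N}"
    then obtain a b where ab: "x = a10 M a + b" "a \<in> M0" "b \<in> N" by blast
    have i: "a10 M a \<in> M1" "b \<in> M1" using inM(2)[OF ab(2)] inN[OF ab(3)] .
    have "x \<in> M1" using addcl(2)[OF i] ab(1) by simp
    moreover have "a21 M x = a21 M b" using ab(1) addM(4)[OF i] rel(6)[OF ab(2)] by simp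
    ultimately show "x \<in> {x \<in> M1. a21 M x \<in> a21 M ` N}" using ab(3) by blast
  next
    fix x assume "x \<in> {x \<in> M1. a21 M x \<in> a21 M ` N}"
    then obtain n where n: "x \<in> M1" "n \<in> N" "a21 M x = a21 M n" by blast
    have "x - n \<in> M1" using diffcl(2)[OF n(1) inN[OF n(2)]] .
    moreover have "a21 M (x - n) = 0" using diffM(4)[OF n(1) inN[OF n(2)]] n(3) by simp
    ultimately have "x - n \<in> a10 M ` M0" using ex(1) by blast
    then obtain a where "a \<in> M0" "x - n = a10 M a" by blast
    then have "x = a10 M a + n" by (metis diff_add_cancel)
    then show "x \<in> {a10 M a + b |a b. a \<in> M0 \<and> b \<in> N}" using \<open>a \<in> M0\<close> n(2) by blast
  qed
  have q2: "{a21 M a + b |a b. a \<in> M1 \<and> b \<in> a21 M ` N} = {x \<in> M2. a02 M x \<in> a01 M ` N}"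
  proof (intro equalityI subsetI)
    fix x assume "x \<in> {a21 M a + b |a b. a \<in> M1 \<and> b \<in> a21 M ` N}"
    then obtain a n where ab: "x = a21 M a + a21 M n" "a \<in> M1" "n \<in> N" by blast
    have i: "a21 M a \<in> M2" "a21 M n \<in> M2" using inM(4)[OF ab(2)] inM(4)[OF inN[OF ab(3)]] .
    have "x \<in> M2" using addcl(3)[OF i] ab(1) by simp
    moreover have "a02 M x = 0" using ab(1) addM(5)[OF i] rel(2)[OF ab(2)] rel(2)[OF inN[OF ab(3)]] by simp
    ultimately show "x \<in> {x \<in> M2. a02 M x \<in> a01 M ` N}" using z01 by simp
  next
    fix x assume "x \<in> {x \<in> M2. a02 M x \<in> a01 M ` N}"
    then obtain n where n: "x \<in> M2" "n \<in> N" "a02 M x = a01 M n" by blast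
    have "a10 M (a01 M n) = 0" using rel(3)[OF n(1)] n(3) by simp
    then have "a02 M x = 0" using F5[OF n(2)] n(3) by simp
    then have "x \<in> a21 M ` M1" using ex(2) n(1) by blast
    then obtain a where "a \<in> M1" "x = a21 M a + 0" by auto
    then show "x \<in> {a21 M a + b |a b. a \<in> M1 \<and> b \<in> a21 M ` N}" using z21 by blast
  qed
  have q3: "{a02 M a + b |a b. a \<in> M2 \<and> b \<in> a01 M ` N} = {x \<in> M0. a10 M x \<in> N}"
  proof (intro equalityI subsetI)
    fix x assume "x \<in> {a02 M a + b |a b. a \<in> M2 \<and> b \<in> a01 M ` N}"
    then obtain a n where ab: "x = a02 M a + a01 M n" "a \<in> M2" "n \<in> N" by blast
    have i: "a02 M a \<in> M0" "a01 M n \<in> M0" using inM(5)[OF ab(2)] inM(1)[OF inN[OF ab(3)]] .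
    have "x \<in> M0" using addcl(1)[OF i] ab(1) by simp
    moreover have "a10 M x = a10 M (a01 M n)" using ab(1) addM(2)[OF i] rel(3)[OF ab(2)] by simp
    ultimately show "x \<in> {x \<in> M0. a10 M x \<in> N}" using K_N[OF ab(3)] by simp
  next
    fix x assume "x \<in> {x \<in> M0. a10 M x \<in> N}"
    then have x: "x \<in> M0" "a10 M x \<in> N" by auto
    have "a21 M (a10 M x) = 0" using rel(6)[OF x(1)] .
    then obtain w where w: "w \<in> N" "a10 M x = a10 M (a01 M w)" using F4[OF x(2)] by blast
    have wi: "a01 M w \<in> M0" using inM(1)[OF inN[OF w(1)]] .
    have "x - a01 M w \<in> M0" using diffcl(1)[OF x(1) wi] .
    moreover have "a10 M (x - a01 M w) = 0" using diffM(2)[OF x(1) wi] w(2) by simp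
    ultimately have "x - a01 M w \<in> a02 M ` M2" using ex(3) by blast
    then obtain a where "a \<in> M2" "x - a01 M w = a02 M a" by blast
    then have "x = a02 M a + a01 M w" by (metis diff_add_cancel)
    then show "x \<in> {a02 M a + b |a b. a \<in> M2 \<and> b \<in> a01 M ` N}" using \<open>a \<in> M2\<close> w(1) by blast
  qed
  have q4: "{a20 M a + b |a b. a \<in> M0 \<and> b \<in> a21 M ` N} = {x \<in> M2. a12 M x \<in> N}"
  proof (intro equalityI subsetI)
    fix x assume "x \<in> {a20 M a + b |a b. a \<in> M0 \<and> b \<in> a21 M ` N}"
    then obtain a n where ab: "x = a20 M a + a21 M n" "a \<in> M0" "n \<in> N" by blast
    have i: "a20 M a \<in> M2" "a21 M n \<in> M2" using inM(6)[OF ab(2)] inM(4)[OF inN[OF ab(3)]] .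
    have "x \<in> M2" using addcl(3)[OF i] ab(1) by simp
    moreover have "a12 M x = T n" using ab(1) addM(3)[OF i] rel(4)[OF ab(2)] by simp
    ultimately show "x \<in> {x \<in> M2. a12 M x \<in> N}" using T_N[OF ab(3)] by simp
  next
    fix x assume "x \<in> {x \<in> M2. a12 M x \<in> N}"
    then have x: "x \<in> M2" "a12 M x \<in> N" by auto
    have "a01 M (a12 M x) = 0" using rel(1)[OF x(1)] .
    then obtain w where w: "w \<in> N" "a12 M x = T w" using F6[OF x(2)] by blast
    have wi: "a21 M w \<in> M2" using inM(4)[OF inN[OF w(1)]] .
    have "x - a21 M w \<in> M2" using diffcl(3)[OF x(1) wi] .
    moreover have "a12 M (x - a21 M w) = 0" using diffM(3)[OF x(1) wi] w(2) by simp
    ultimately have "x - a21 M w \<in> a20 M ` M0" using ex(4) by blast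
    then obtain a where "a \<in> M0" "x - a21 M w = a20 M a" by blast
    then have "x = a20 M a + a21 M w" by (metis diff_add_cancel)
    then show "x \<in> {a20 M a + b |a b. a \<in> M0 \<and> b \<in> a21 M ` N}" using \<open>a \<in> M0\<close> w(1) by blast
  qed
  have q5: "{a12 M a + b |a b. a \<in> M2 \<and> b \<in> N} = {x \<in> M1. a01 M x \<in> a01 M ` N}"
  proof (intro equalityI subsetI)
    fix x assume "x \<in> {a12 M a + b |a b. a \<in> M2 \<and> b \<in> N}"
    then obtain a b where ab: "x = a12 M a + b" "a \<in> M2" "b \<in> N" by blast
    have i: "a12 M a \<in> M1" "b \<in> M1" using inM(3)[OF ab(2)] inN[OF ab(3)] .
    have "x \<in> M1" using addcl(2)[OF i] ab(1) by simp
    moreover have "a01 M x = a01 M b" using ab(1) addM(1)[OF i] rel(1)[OF ab(2)] by simp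
    ultimately show "x \<in> {x \<in> M1. a01 M x \<in> a01 M ` N}" using ab(3) by blast
  next
    fix x assume "x \<in> {x \<in> M1. a01 M x \<in> a01 M ` N}"
    then obtain n where n: "x \<in> M1" "n \<in> N" "a01 M x = a01 M n" by blast
    have "x - n \<in> M1" using diffcl(2)[OF n(1) inN[OF n(2)]] .
    moreover have "a01 M (x - n) = 0" using diffM(1)[OF n(1) inN[OF n(2)]] n(3) by simp
    ultimately have "x - n \<in> a12 M ` M2" using ex(5) by blast
    then obtain a where "a \<in> M2" "x - n = a12 M a" by blast
    then have "x = a12 M a + n" by (metis diff_add_cancel)
    then show "x \<in> {a12 M a + b |a b. a \<in> M2 \<and> b \<in> N}" using \<open>a \<in> M2\<close> n(2) by blast
  qed
  have q6: "{a01 M a + b |a b. a \<in> M1 \<and> b \<in> a01 M ` N} = {x \<in> M0. a20 M x \<in> a21 M ` N}"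
  proof (intro equalityI subsetI)
    fix x assume "x \<in> {a01 M a + b |a b. a \<in> M1 \<and> b \<in> a01 M ` N}"
    then obtain a n where ab: "x = a01 M a + a01 M n" "a \<in> M1" "n \<in> N" by blast
    have i: "a01 M a \<in> M0" "a01 M n \<in> M0" using inM(1)[OF ab(2)] inM(1)[OF inN[OF ab(3)]] .
    have "x \<in> M0" using addcl(1)[OF i] ab(1) by simp
    moreover have "a20 M x = 0" using ab(1) addM(6)[OF i] rel(5)[OF ab(2)] rel(5)[OF inN[OF ab(3)]] by simp
    ultimately show "x \<in> {x \<in> M0. a20 M x \<in> a21 M ` N}" using z21 by simp
  next
    fix x assume "x \<in> {x \<in> M0. a20 M x \<in> a21 M ` N}"
    then obtain n where n: "x \<in> M0" "n \<in> N" "a20 M x = a21 M n" by blast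
    have "T n = 0" using rel(4)[OF n(1)] n(3) by simp
    then have "a20 M x = 0" using F8[OF n(2)] n(3) by simp
    then have "x \<in> a01 M ` M1" using ex(6) n(1) by blast
    then obtain a where "a \<in> M1" "x = a01 M a + 0" by auto
    then show "x \<in> {a01 M a + b |a b. a \<in> M1 \<and> b \<in> a01 M ` N}" using z01 by blast
  qed
  show ?thesis unfolding kquot_exact_def quot_exact_at_def using q1 q2 q3 q4 q5 q6 by simp
qed

end


context K7 begin

abbreviation "thZ \<equiv> (\<lambda>y. y - a21 M (a12 M y))"

lemma thZ_a21: "x \<in> M1 \<Longrightarrow> thZ (a21 M x) = a21 M (s x)"
  using diffM(4) T_M1 by simp

lemma ZthZ: "Zth_module p (\<lambda>d. a21 M ` N1 d) thZ"
proof -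
  have "ghom False (\<lambda>d. a21 M ` N1 d) (\<lambda>d. a21 M ` N1 d) thZ"
    unfolding ghom_def
  proof (intro conjI allI ballI)
    fix d z assume "z \<in> a21 M ` N1 d"
    then obtain y where y: "y \<in> N1 d" "z = a21 M y" by blast
    then have "thZ z = a21 M (s y)" using thZ_a21 Npiece inN by blast
    then show "thZ z \<in> a21 M ` N1 (d \<noteq> False)" using s_piece y by simp
  next
    fix x y assume xy: "x \<in> car (\<lambda>d. a21 M ` N1 d)" "y \<in> car (\<lambda>d. a21 M ` N1 d)"
    then have "x \<in> M2" "y \<in> M2" using img_sub by auto
    then show "thZ (x + y) = thZ x + thZ y" using addM(3) addM(4) inM by simp
  qed
  moreover have "Nop p thZ z = 0" if zz: "z \<in> a21 M ` N" for z
  proof -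
    obtain y where y: "y \<in> N" "z = a21 M y" using zz by blast
    have "Nop p (\<lambda>y. y - a20 M (a02 M y)) z = nmul p z"
      by (rule Nop_fix) (use rel(2)[OF inN[OF y(1)]] y(2) in simp)
    moreover have "z \<in> M2" using zz img_sub by blast
    ultimately show ?thesis using relN(3)[of z] by simp
  qed
  ultimately show ?thesis unfolding Zth_module_def uniq_pdiv_def using ggZ(1) pdiv21 by simp
qed

lemma f1_img: "(\<lambda>x. (a01 M x, a21 M x)) ` N1 d = a01 M ` N1 d \<times> a21 M ` N1 d"
proof (intro equalityI subsetI)
  fix z assume "z \<in> a01 M ` N1 d \<times> a21 M ` N1 d"
  then obtain u v where uv: "u \<in> N1 d" "v \<in> N1 d" "z = (a01 M u, a21 M v)" by blast
  have uN: "u \<in> N" "v \<in> N" using uv(1,2) Npiece(3) by blast+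
  obtain x where x: "x \<in> N" "a01 M x = a01 M u" "a21 M x = a21 M v" using F12[OF uN] by blast
  have uk: "u \<in> kM1 M d" "v \<in> kM1 M d" using uv(1,2) Npiece(1) by blast+
  have "a01 M x \<in> kM0 M d" using hom_piece(1)[OF uk(1)] x(2) by simp
  moreover have "a21 M x \<in> kM2 M (\<not> d)" using hom_piece(2)[OF uk(2)] x(3) by simp
  ultimately have "x \<in> N1 d" using grade_det[OF x(1)] by blast
  then show "z \<in> (\<lambda>x. (a01 M x, a21 M x)) ` N1 d" using x uv(3) by (auto intro!: image_eqI[of _ _ x])
next
  fix z assume "z \<in> (\<lambda>x. (a01 M x, a21 M x)) ` N1 d"
  then show "z \<in> a01 M ` N1 d \<times> a21 M ` N1 d" by blast
qed

lemma exE: "\<exists>Y thY thZ f0 f1 f2.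
             Zp_module p (kM0 Mp) \<and> Zth_module p Y thY
             \<and> Zth_module p (\<lambda>d. kM2 Mp (\<not> d)) thZ
             \<and> kiso Mp (Emod p (kM0 Mp) Y thY (\<lambda>d. kM2 Mp (\<not> d)) thZ) f0 f1 f2"
proof (intro exI conjI)
  show "Zp_module p (kM0 Mp)" unfolding Zp_module_def uniq_pdiv_def using ggP0(1) pdiv01 by simp
  show "Zth_module p (\<lambda>_. {0}) (\<lambda>_. 0)" by (rule Zth0)
  show "Zth_module p (\<lambda>d. kM2 Mp (\<not> d)) thZ" using ZthZ by simp
  have G0: "gbij (\<lambda>d. a01 M ` N1 d) (\<lambda>d. a01 M ` N1 d \<times> {0}) (\<lambda>m. (m, 0))"
    by (rule gbij_intro[OF ggP0(1)]) (auto simp: addon_def zero_prod_def)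
  have G1: "gbij N1 (\<lambda>d. a01 M ` N1 d \<times> a21 M ` N1 d) (\<lambda>x. (a01 M x, a21 M x))"
  proof (rule gbij_intro[OF ggN f1_img])
    show "addon N (\<lambda>x. (a01 M x, a21 M x))" unfolding addon_def using addM inN by simp
    show "\<And>x. x \<in> N \<Longrightarrow> (a01 M x, a21 M x) = 0 \<Longrightarrow> x = 0" using F11 by (simp add: zero_prod_def)
  qed
  have G2: "gbij (\<lambda>d. a21 M ` N1 (\<not> d)) (\<lambda>d. {0} \<times> a21 M ` N1 (\<not> d)) (\<lambda>z. (0, z))"
    by (rule gbij_intro[OF ggP2(1)]) (auto simp: addon_def zero_prod_def)
  have c1: "\<forall>x\<in>a01 M ` N. (a01 M (a10 M x), a21 M (a10 M x)) = (nmul p x, 0)"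
    using a01_K rel(6) inM inN by auto
  have c2: "\<forall>x\<in>a21 M ` N. (a01 M (a12 M x), a21 M (a12 M x)) = (0, x - thZ x)"
    using rel(1) inM inN by auto
  have c3: "\<forall>x\<in>a21 M ` N. a02 M x = 0" using rel(2) inN by auto
  have c4: "\<forall>x\<in>a01 M ` N. a20 M x = 0" using rel(5) inN by auto
  show "kiso Mp (Emod p (kM0 Mp) (\<lambda>_. {0}) (\<lambda>_. 0) (\<lambda>d. kM2 Mp (\<not> d)) thZ)
     (\<lambda>m. (m, 0)) (\<lambda>x. (a01 M x, a21 M x)) (\<lambda>z. (0, z))"
    unfolding kiso_def Emod_def using G0 G1 G2 c1 c2 c3 c4 by simp
qed

end
theorem theorem7p13:
  fixes p :: nat and M :: "'a::ab_group_add kmod" and N1 :: "bool \<Rightarrow> 'a set"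
  assumes "prime p"
    and "kmodule p M" and "kexact M"
    and "graded_subgroup N1 (kM1 M)"
    and "\<forall>x\<in>car N1. x - a12 M (a21 M x) \<in> car N1"
    and "uniq_pdiv p N1"
  defines "M' \<equiv> M\<lparr> kM0 := (\<lambda>d. a01 M ` N1 d), kM1 := N1, kM2 := (\<lambda>d. a21 M ` N1 (\<not> d)) \<rparr>"
  shows "ksubmodule M' M \<and> kmodule p M' \<and> kexact M' \<and> kuniq_pdiv p M'
       \<and> (\<exists>Y thY thZ f0 f1 f2.
             Zp_module p (kM0 M') \<and> Zth_module p Y thY
             \<and> Zth_module p (\<lambda>d. kM2 M' (\<not> d)) thZ
             \<and> kiso M' (Emod p (kM0 M') Y thY (\<lambda>d. kM2 M' (\<not> d)) thZ) f0 f1 f2)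
       \<and> kquot_exact M M'"
proof -
  interpret K7 p M N1 using assms(2-6) by unfold_locales
  show ?thesis unfolding M'_def by (intro conjI subm kmodp kexp kupd exE quot)
qed

end
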